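(* For every integer $d\ge2$ there are infinitely many $d$-degenerate graphs $H$ with $\alpha_d(H)<\mathrm{flap}_d(H)$.
   Context: Graphs are finite and simple. A graph is $d$-degenerate if every subgraph has minimum degree at most $d$. $\alpha_d(H)$ is the maximum size of a set of pairwise non-adjacent vertices of $H$ each of degree at most $d$ in $H$. A separation of $H$ is an ordered pair $(A,B)$ of subsets of $V(H)$ with $A\cup B=V(H)$ and no edge between $A\setminus B$ and $B\setminus A$; its order is $|A\cap B|$. A collection $\mathcal C$ of separations is independent if $A\setminus B\ne\emptyset$ for each $(A,B)\in\mathcal C$ and $A\subseteq D$, $C\subseteq B$ for all distinct $(A,B),(C,D)\in\mathcal C$. $\mathrm{flap}_d(H)$ is the maximum size of an independent collection of separations of $H$ each of order at most $d$. *)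

theory Defs
  imports Main
begin

definition graph :: "'a set \<Rightarrow> 'a set set \<Rightarrow> bool" where
  "graph V E \<longleftrightarrow> finite V \<and> (\<forall>e\<in>E. e \<subseteq> V \<and> card e = 2)"

definition degree :: "'a set set \<Rightarrow> 'a \<Rightarrow> nat" where
  "degree E v = card {e \<in> E. v \<in> e}"

definition subgraph :: "'a set \<Rightarrow> 'a set set \<Rightarrow> 'a set \<Rightarrow> 'a set set \<Rightarrow> bool" where
  "subgraph V' E' V E \<longleftrightarrow> V' \<subseteq> V \<and> E' \<subseteq> E \<and> (\<forall>e\<in>E'. e \<subseteq> V')"

definition degenerate :: "nat \<Rightarrow> 'a set \<Rightarrow> 'a set set \<Rightarrow> bool" where
  "degenerate d V E \<longleftrightarrow>
     (\<forall>V' E'. subgraph V' E' V E \<and> V' \<noteq> {} \<longrightarrow> (\<exists>v\<in>V'. degree E' v \<le> d))"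

definition indep_set :: "'a set set \<Rightarrow> 'a set \<Rightarrow> bool" where
  "indep_set E S \<longleftrightarrow> (\<forall>e\<in>E. \<not> e \<subseteq> S)"

definition alpha :: "nat \<Rightarrow> 'a set \<Rightarrow> 'a set set \<Rightarrow> nat" where
  "alpha d V E = Max {card S | S. S \<subseteq> V \<and> indep_set E S \<and> (\<forall>v\<in>S. degree E v \<le> d)}"

definition separation :: "'a set \<Rightarrow> 'a set set \<Rightarrow> 'a set \<Rightarrow> 'a set \<Rightarrow> bool" where
  "separation V E A B \<longleftrightarrow> A \<subseteq> V \<and> B \<subseteq> V \<and> A \<union> B = V \<and>
     (\<forall>e\<in>E. \<not> (e \<inter> (A - B) \<noteq> {} \<and> e \<inter> (B - A) \<noteq> {}))"

definition sep_order :: "'a set \<Rightarrow> 'a set \<Rightarrow> nat" where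
  "sep_order A B = card (A \<inter> B)"

definition independent_seps :: "('a set \<times> 'a set) set \<Rightarrow> bool" where
  "independent_seps C \<longleftrightarrow>
     (\<forall>(A,B)\<in>C. A - B \<noteq> {}) \<and>
     (\<forall>(A,B)\<in>C. \<forall>(C',D)\<in>C. (A,B) \<noteq> (C',D) \<longrightarrow> A \<subseteq> D \<and> C' \<subseteq> B)"

definition flap :: "nat \<Rightarrow> 'a set \<Rightarrow> 'a set set \<Rightarrow> nat" where
  "flap d V E = Max {card C | C. independent_seps C \<and>
      (\<forall>(A,B)\<in>C. separation V E A B \<and> sep_order A B \<le> d)}"

end

theory Submission
  imports Defs
begin

definition Rel :: "nat \<Rightarrow> nat \<Rightarrow> nat \<Rightarrow> nat \<Rightarrow> bool" where
 "Rel d n u v \<longleftrightarrow> (u = 0 \<and> (v = 1 \<or> v = n)) \<or>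
    (u \<noteq> 0 \<and> (v = u+1 \<or> (v \<le> u + d \<and> (\<exists>j. j*(d+2) < u \<and> v \<le> j*(d+2) + (d+2)))))"

definition GE :: "nat \<Rightarrow> nat \<Rightarrow> nat set set" where
 "GE d n = {{u,v} | u v. u < v \<and> v \<le> n \<and> Rel d n u v}"

lemma mkedge: "u<v \<Longrightarrow> v \<le> n \<Longrightarrow> Rel d n u v \<Longrightarrow> {u,v} \<in> GE d n \<and> {v,u} \<in> GE d n"
  unfolding GE_def by (auto simp: insert_commute)

lemma GE_sub: "GE d n \<subseteq> Pow {..n}"
  unfolding GE_def by auto

lemma GE_finite: "finite (GE d n)"
  using GE_sub finite_subset by (metis finite_Pow_iff finite_atMost)

lemma graph_GE: "graph {..n} (GE d n)"
  unfolding graph_def GE_def by auto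

lemma block_unique:
  fixes m :: nat
  assumes "j*m < x" "x \<le> j*m+m" "i*m < x" "x \<le> i*m+m"
  shows "i = j"
proof (rule ccontr)
  assume "i \<noteq> j"
  then consider "i < j" | "j < i" by linarith
  then show False
  proof cases
    case 1
    then have "Suc i * m \<le> j * m" by (intro mult_le_mono1) simp
    then show False using assms by simp
  next
    case 2
    then have "Suc j * m \<le> i * m" by (intro mult_le_mono1) simp
    then show False using assms by simp
  qed
qed

lemma degree_ge:
  assumes "finite E" "finite N" "\<forall>u\<in>N. {v,u}\<in>E \<and> u\<noteq>v"
  shows "card N \<le> degree E v"
proof -
  have inj: "inj_on (\<lambda>u. {v,u}) N"
    using assms(3) by (auto simp: inj_on_def doubleton_eq_iff)
  have "(\<lambda>u. {v,u}) ` N \<subseteq> {e\<in>E. v\<in>e}" using assms(3) by auto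
  then have "card ((\<lambda>u. {v,u}) ` N) \<le> card {e\<in>E. v\<in>e}"
    using assms(1) by (intro card_mono) auto
  then show ?thesis using card_image[OF inj] unfolding degree_def by simp
qed

lemma degen_order:
  fixes E :: "nat set set"
  assumes "finite V" "\<forall>e\<in>E. \<exists>u v. e={u,v} \<and> u \<noteq> v"
    and "\<forall>v\<in>V. finite {u. {v,u}\<in>E \<and> v<u} \<and> card {u. {v,u}\<in>E \<and> v<u} \<le> d"
  shows "degenerate d V E"
  unfolding degenerate_def
proof (intro allI impI, elim conjE)
  fix V' E' assume sg: "subgraph V' E' V E" and ne: "V' \<noteq> {}"
  have fV': "finite V'" using sg assms(1) unfolding subgraph_def using finite_subset by blast
  define x where "x = Min V'"
  have xV: "x \<in> V'" using fV' ne x_def by simp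
  have xVV: "x \<in> V" using xV sg unfolding subgraph_def by blast
  have sub: "{e\<in>E'. x\<in>e} \<subseteq> (\<lambda>u. {x,u}) ` {u. {x,u}\<in>E \<and> x<u}"
  proof
    fix e assume e: "e \<in> {e\<in>E'. x\<in>e}"
    then have eE: "e \<in> E" and eV: "e \<subseteq> V'" and xe: "x \<in> e" using sg unfolding subgraph_def by auto
    obtain a c where ac: "e = {a,c}" "a \<noteq> c" using assms(2) eE by blast
    obtain u where u: "e = {x,u}" "u \<noteq> x" using ac xe by auto
    have "u \<in> V'" using u eV by auto
    then have "x \<le> u" using fV' x_def by simp
    then have "x < u" using u by simp
    then show "e \<in> (\<lambda>u. {x,u}) ` {u. {x,u}\<in>E \<and> x<u}" using u eE by auto
  qed
  have fin: "finite {u. {x,u}\<in>E \<and> x<u}" and cd: "card {u. {x,u}\<in>E \<and> x<u} \<le> d"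
    using assms(3) xVV by auto
  have "degree E' x \<le> card ((\<lambda>u. {x,u}) ` {u. {x,u}\<in>E \<and> x<u})"
    unfolding degree_def using sub fin by (intro card_mono) auto
  also have "\<dots> \<le> d" using card_image_le[OF fin, of "\<lambda>u. {x,u}"] cd by linarith
  finally show "\<exists>v\<in>V'. degree E' v \<le> d" using xV by blast
qed

lemma degen_GE:
  assumes "d \<ge> 2"
  shows "degenerate d {..n} (GE d n)"
proof (rule degen_order)
  show "\<forall>e\<in>GE d n. \<exists>u v. e = {u, v} \<and> u \<noteq> v" unfolding GE_def by auto
  show "\<forall>v\<in>{..n}. finite {u. {v, u} \<in> GE d n \<and> v < u} \<and> card {u. {v, u} \<in> GE d n \<and> v < u} \<le> d"
  proof
    fix v assume "v \<in> {..n}"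
    have sub: "{u. {v, u} \<in> GE d n \<and> v < u} \<subseteq> (if v = 0 then {1,n} else {v+1..v+d})"
    proof
      fix u assume "u \<in> {u. {v, u} \<in> GE d n \<and> v < u}"
      then obtain a c where "{v,u} = {a,c}" "a < c" "Rel d n a c" "v < u" unfolding GE_def by auto
      then have "Rel d n v u" "v < u" by (auto simp: doubleton_eq_iff)
      then show "u \<in> (if v = 0 then {1,n} else {v+1..v+d})" using assms unfolding Rel_def by auto
    qed
    have fin: "finite (if v = 0 then {1,n} else {v+1..v+d})" by simp
    have "card (if v = 0 then {1,n} else {v+1..v+d}) \<le> d"
    proof (cases "v = 0")
      case True
      have "card {1,n} \<le> 2" by (simp add: card_insert_le_m1)
      then show ?thesis using True assms by simp
    next
      case False then show ?thesis by simp
    qed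
    then show "finite {u. {v, u} \<in> GE d n \<and> v < u} \<and> card {u. {v, u} \<in> GE d n \<and> v < u} \<le> d"
      using sub fin card_mono[OF fin sub] finite_subset[OF sub fin] by linarith
  qed
qed simp

lemma deg_big:
  assumes d: "d \<ge> 2" and n: "n = k*(d+2)" and v: "1 \<le> v" "v \<le> n"
  shows "d+1 \<le> degree (GE d n) v"
proof -
  define m where "m = d+2"
  define i where "i = (v-1) div m"
  have m2: "m \<ge> 2" using m_def by simp
  have dm: "(v-1) = i*m + (v-1) mod m" unfolding i_def by simp
  have mm: "(v-1) mod m < m" using m2 by simp
  have lo: "i*m < v" and hi: "v \<le> i*m+m" using dm mm v by linarith+
  have ik: "i < k"
  proof (rule ccontr)
    assume "\<not> i < k"
    then have "k*m \<le> i*m" by (intro mult_le_mono1) simp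
    then show False using lo v n m_def by simp
  qed
  have bn: "i*m + m \<le> n"
  proof -
    have "Suc i * m \<le> k*m" using ik by (intro mult_le_mono1) simp
    then show ?thesis using n m_def by simp
  qed
  have n1: "m \<le> n" using bn by simp
  define b where "b = i*m"
  have blk: "\<And>u w. b < u \<Longrightarrow> u \<le> b + m \<Longrightarrow> b < w \<Longrightarrow> w \<le> b+m \<Longrightarrow> u < w \<Longrightarrow> w \<le> u + d \<Longrightarrow> Rel d n u w"
    unfolding Rel_def b_def m_def by (metis add_le_same_cancel1 gr_implies_not_zero le_add1 not_less0)
  have fE: "finite (GE d n)" by (rule GE_finite)
  consider "v = b+1" | "b+2 \<le> v" "v \<le> b+d+1" | "v = b+m" using lo hi b_def m_def by linarith
  then show ?thesis
  proof cases
    case 1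
    define N where "N = insert (v-1) {v+1..v+d}"
    have cN: "card N = d+1" unfolding N_def by simp
    have "\<forall>u\<in>N. {v,u}\<in>GE d n \<and> u\<noteq>v"
    proof
      fix u assume "u \<in> N"
      then consider "u = v-1" | "v+1 \<le> u" "u \<le> v+d" unfolding N_def by auto
      then show "{v,u}\<in>GE d n \<and> u\<noteq>v"
      proof cases
        case 1
        have "Rel d n (v-1) v" unfolding Rel_def using v by auto
        then show ?thesis using mkedge[of "v-1" v n d] 1 v by auto
      next
        case 2
        have "Rel d n v u" unfolding Rel_def using 2 v lo \<open>v = b+1\<close> b_def m_def by auto
        moreover have "u \<le> n" using 2 bn \<open>v = b+1\<close> b_def m_def by linarith
        ultimately show ?thesis using mkedge[of v u n d] 2 by auto
      qed
    qed
    then show ?thesis using degree_ge[OF fE, of N v] cN unfolding N_def by simp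
  next
    case 2
    define N where "N = {b+1..b+m} - {v}"
    have cN: "card N = d+1" unfolding N_def using 2 m_def by simp
    have "\<forall>u\<in>N. {v,u}\<in>GE d n \<and> u\<noteq>v"
    proof
      fix u assume uN: "u \<in> N"
      then have u: "b+1 \<le> u" "u \<le> b+m" "u \<noteq> v" unfolding N_def by auto
      show "{v,u}\<in>GE d n \<and> u\<noteq>v"
      proof (cases "u < v")
        case True
        have "Rel d n u v" by (rule blk) (use u True 2 m_def in auto)
        then show ?thesis using mkedge[of u v n d] True v u by auto
      next
        case False
        then have "v < u" using u by simp
        have "Rel d n v u" by (rule blk) (use u \<open>v<u\<close> 2 m_def in auto)
        moreover have "u \<le> n" using u bn b_def by linarith
        ultimately show ?thesis using mkedge[of v u n d] \<open>v<u\<close> by auto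
      qed
    qed
    then show ?thesis using degree_ge[OF fE, of N v] cN unfolding N_def by simp
  next
    case 3
    define x where "x = (if v = n then 0 else v+1)"
    define N where "N = insert x {v-d..v-1}"
    have "x \<notin> {v-d..v-1}" unfolding x_def using 3 m_def by auto
    then have cN: "card N = d+1" unfolding N_def using 3 m_def by simp
    have "\<forall>u\<in>N. {v,u}\<in>GE d n \<and> u\<noteq>v"
    proof
      fix u assume "u \<in> N"
      then consider "u = x" | "v-d \<le> u" "u \<le> v-1" unfolding N_def by auto
      then show "{v,u}\<in>GE d n \<and> u\<noteq>v"
      proof cases
        case 1
        show ?thesis
        proof (cases "v = n")
          case True
          have "Rel d n 0 v" unfolding Rel_def using True by simp
          then show ?thesis using mkedge[of 0 v n d] 1 True v unfolding x_def by auto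
        next
          case False
          have "Rel d n v (v+1)" unfolding Rel_def using v by simp
          then show ?thesis using mkedge[of v "v+1" n d] 1 False v unfolding x_def by auto
        qed
      next
        case 2
        have "Rel d n u v" by (rule blk) (use 2 3 m_def in auto)
        then show ?thesis using mkedge[of u v n d] 2 v 3 m_def by auto
      qed
    qed
    then show ?thesis using degree_ge[OF fE, of N v] cN unfolding N_def by simp
  qed
qed

definition Af :: "nat \<Rightarrow> nat \<Rightarrow> nat set" where "Af d i = {i*(d+2)+1 .. i*(d+2)+(d+2)}"
definition Mf :: "nat \<Rightarrow> nat \<Rightarrow> nat set" where "Mf d i = {i*(d+2)+2 .. i*(d+2)+(d+1)}"
definition Bf :: "nat \<Rightarrow> nat \<Rightarrow> nat \<Rightarrow> nat set" where "Bf d n i = {..n} - Mf d i"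

lemma Af_sub:
  assumes "n = k*(d+2)" "i < k"
  shows "Af d i \<subseteq> {..n}"
proof -
  have "Suc i * (d+2) \<le> k*(d+2)" using assms by (intro mult_le_mono1) simp
  then show ?thesis using assms unfolding Af_def by auto
qed

lemma sep_ok:
  assumes d: "d \<ge> 2" and n: "n = k*(d+2)" and ik: "i < k"
  shows "separation {..n} (GE d n) (Af d i) (Bf d n i) \<and> sep_order (Af d i) (Bf d n i) \<le> d
         \<and> Af d i - Bf d n i \<noteq> {}"
proof -
  define m where "m = d+2"
  have AV: "Af d i \<subseteq> {..n}" by (rule Af_sub[OF n ik])
  have bn: "i*m + m \<le> n"
  proof -
    have "Suc i * m \<le> k*m" using ik by (intro mult_le_mono1) simp
    then show ?thesis using n m_def by simp
  qed
  have AB: "Af d i - Bf d n i = Mf d i" using AV unfolding Bf_def Af_def Mf_def by auto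
  have BA: "Bf d n i - Af d i = {..n} - Af d i" unfolding Bf_def Af_def Mf_def by auto
  have int: "Af d i \<inter> Bf d n i = {i*m+1, i*m+m}" using AV unfolding Bf_def Af_def Mf_def m_def by auto
  have edges: "\<forall>e\<in>GE d n. \<not> (e \<inter> Mf d i \<noteq> {} \<and> e \<inter> ({..n} - Af d i) \<noteq> {})"
  proof (intro ballI notI)
    fix e assume eE: "e \<in> GE d n" and h: "e \<inter> Mf d i \<noteq> {} \<and> e \<inter> ({..n} - Af d i) \<noteq> {}"
    obtain u v where e: "e = {u,v}" "u<v" "v \<le> n" "Rel d n u v" using eE unfolding GE_def by auto
    have cases: "(u \<in> Mf d i \<and> v \<notin> Af d i) \<or> (v \<in> Mf d i \<and> u \<notin> Af d i)"
      using h e unfolding Mf_def Af_def by auto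
    then show False
    proof
      assume a: "u \<in> Mf d i \<and> v \<notin> Af d i"
      then have u1: "i*m+2 \<le> u" "u \<le> i*m+d+1" and v1: "v > i*m + m"
        using e(2) unfolding Mf_def Af_def m_def by auto
      have "u \<noteq> 0" using u1 by simp
      then have "v = u+1 \<or> (v \<le> u + d \<and> (\<exists>j. j*m < u \<and> v \<le> j*m + m))"
        using e(4) unfolding Rel_def m_def by auto
      then show False
      proof
        assume "v = u+1" then show False using u1 v1 m_def by simp
      next
        assume "v \<le> u + d \<and> (\<exists>j. j*m < u \<and> v \<le> j*m + m)"
        then obtain j where j: "j*m < u" "v \<le> j*m+m" by blast
        have "i = j" by (rule block_unique[of j m u i]) (use j u1 e(2) m_def in auto)
        then show False using j v1 by simp
      qed
    next
      assume a: "v \<in> Mf d i \<and> u \<notin> Af d i"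
      then have v1: "i*m+2 \<le> v" "v \<le> i*m+d+1" and u1: "u \<le> i*m"
        using e(2) unfolding Mf_def Af_def m_def by auto
      show False
      proof (cases "u = 0")
        case True
        then have "v = 1 \<or> v = n" using e(4) unfolding Rel_def by auto
        then show False using v1 bn m_def by auto
      next
        case False
        then have "v = u+1 \<or> (v \<le> u + d \<and> (\<exists>j. j*m < u \<and> v \<le> j*m + m))"
          using e(4) unfolding Rel_def m_def by auto
        then show False
        proof
          assume "v = u+1" then show False using u1 v1 by simp
        next
          assume "v \<le> u + d \<and> (\<exists>j. j*m < u \<and> v \<le> j*m + m)"
          then obtain j where j: "j*m < u" "v \<le> j*m+m" by blast
          have "i = j" by (rule block_unique[of j m v i]) (use j u1 v1 e(2) m_def in auto)
          then show False using j u1 by simp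
        qed
      qed
    qed
  qed
  have sep: "separation {..n} (GE d n) (Af d i) (Bf d n i)"
    unfolding separation_def using AV edges AB BA by (auto simp: Bf_def)
  have "card {i*m+1, i*m+m} = 2" using m_def by simp
  then have "sep_order (Af d i) (Bf d n i) \<le> d" unfolding sep_order_def using int d by simp
  moreover have "Af d i - Bf d n i \<noteq> {}" using AB d unfolding Mf_def by simp
  ultimately show ?thesis using sep by simp
qed

lemma indep_ok:
  assumes n: "n = k*(d+2)" and ik: "i < k" and "i \<noteq> j"
  shows "Af d i \<subseteq> Bf d n j"
proof
  fix x assume x: "x \<in> Af d i"
  have "x \<notin> Mf d j"
  proof
    assume "x \<in> Mf d j"
    then have "i = j" using x unfolding Af_def Mf_def
      by (intro block_unique[of j "d+2" x i]) auto
    then show False using assms by simp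
  qed
  then show "x \<in> Bf d n j" using x Af_sub[OF n ik] unfolding Bf_def by auto
qed

lemma flap_ge:
  assumes d: "d \<ge> 2" and n: "n = k*(d+2)" and k: "k \<ge> 2"
  shows "2 \<le> flap d {..n} (GE d n)"
proof -
  define C where "C = {(Af d 0, Bf d n 0), (Af d 1, Bf d n 1)}"
  have ne: "Af d 0 \<noteq> Af d 1" unfolding Af_def by auto
  have cC: "card C = 2" unfolding C_def using ne by auto
  note s0 = sep_ok[OF d n, of 0] and s1 = sep_ok[OF d n, of 1]
  have "independent_seps C"
    unfolding independent_seps_def C_def
    using s0 s1 k indep_ok[OF n, where i=0 and j=1] indep_ok[OF n, where i=1 and j=0] by auto
  moreover have "\<forall>(A,B)\<in>C. separation {..n} (GE d n) A B \<and> sep_order A B \<le> d"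
    unfolding C_def using s0 s1 k by auto
  ultimately have mem: "2 \<in> {card C | C. independent_seps C \<and>
      (\<forall>(A,B)\<in>C. separation {..n} (GE d n) A B \<and> sep_order A B \<le> d)}"
    using cC by force
  define K where "K = card (Pow {..n} \<times> Pow ({..n}::nat set))"
  have "{card C | C. independent_seps C \<and>
      (\<forall>(A,B)\<in>C. separation {..n} (GE d n) A B \<and> sep_order A B \<le> d)} \<subseteq> {..K}"
  proof
    fix x assume "x \<in> {card C | C. independent_seps C \<and>
      (\<forall>(A,B)\<in>C. separation {..n} (GE d n) A B \<and> sep_order A B \<le> d)}"
    then obtain C' where x: "x = card C'" and h: "\<forall>(A,B)\<in>C'. separation {..n} (GE d n) A B" by auto
    have "C' \<subseteq> Pow {..n} \<times> Pow {..n}" using h unfolding separation_def by auto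
    then have "card C' \<le> K" unfolding K_def by (intro card_mono) auto
    then show "x \<in> {..K}" using x by simp
  qed
  then have "finite {card C | C. independent_seps C \<and>
      (\<forall>(A,B)\<in>C. separation {..n} (GE d n) A B \<and> sep_order A B \<le> d)}"
    using finite_subset by blast
  then show ?thesis unfolding flap_def using mem Max_ge by blast
qed

lemma alpha_le:
  assumes d: "d \<ge> 2" and n: "n = k*(d+2)"
  shows "alpha d {..n} (GE d n) \<le> 1"
proof -
  have sub: "{card S | S. S \<subseteq> {..n} \<and> indep_set (GE d n) S \<and> (\<forall>v\<in>S. degree (GE d n) v \<le> d)} \<subseteq> {..1}"
  proof
    fix x assume "x \<in> {card S | S. S \<subseteq> {..n} \<and> indep_set (GE d n) S \<and> (\<forall>v\<in>S. degree (GE d n) v \<le> d)}"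
    then obtain S where x: "x = card S" and S: "S \<subseteq> {..n}" "\<forall>v\<in>S. degree (GE d n) v \<le> d" by auto
    have "S \<subseteq> {0}"
    proof
      fix v assume v: "v \<in> S"
      show "v \<in> {0}"
      proof (rule ccontr)
        assume "v \<notin> {0}"
        then have "d+1 \<le> degree (GE d n) v" using deg_big[OF d n, of v] v S by auto
        then show False using S v by fastforce
      qed
    qed
    then have "card S \<le> 1" using card_mono[of "{0::nat}" S] by simp
    then show "x \<in> {..1}" using x by simp
  qed
  have ne: "0 \<in> {card S | S. S \<subseteq> {..n} \<and> indep_set (GE d n) S \<and> (\<forall>v\<in>S. degree (GE d n) v \<le> d)}"
    unfolding indep_set_def GE_def by force
  show ?thesis unfolding alpha_def using sub ne finite_subset[OF sub]
    by (metis (no_types, lifting) Max_le_iff atMost_iff empty_iff finite_atMost subset_iff)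
qed

theorem mainTheorem7:
  fixes d :: nat
  assumes "d \<ge> 2"
  shows "\<forall>N. \<exists>(V :: nat set) E. graph V E \<and> card V \<ge> N \<and> degenerate d V E \<and>
            alpha d V E < flap d V E"
proof
  fix N
  define k :: nat where "k = N + 2"
  define n where "n = k*(d+2)"
  have "N \<le> n" unfolding n_def k_def by simp
  then have "card {..n} \<ge> N" by simp
  moreover have "alpha d {..n} (GE d n) < flap d {..n} (GE d n)"
    using alpha_le[OF assms n_def] flap_ge[OF assms n_def] k_def by fastforce
  ultimately show "\<exists>(V :: nat set) E. graph V E \<and> card V \<ge> N \<and> degenerate d V E \<and>
            alpha d V E < flap d V E"
    using graph_GE degen_GE[OF assms] by blast
qed

end
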